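(* Let $d\ge1$, $\lambda>0$, $\delta>0$, and let $f:\mathbb{R}^d\to\mathbb{R}$ satisfy: (A1) $f$ is continuous and has at least one minimizer; (A2) $\int_{\mathbb{R}^d}\exp(-f(y)/\delta)\,dy<+\infty$. Then $\operatorname{zprox}^\delta_{\lambda,f}:\mathbb{R}^d\to\mathbb{R}^d$ is a smooth diffeomorphism, i.e. it is $C^\infty$, bijective, and its inverse is $C^\infty$.
   Context: The zeroth-order proximal operator is $\operatorname{zprox}^\delta_{\lambda,f}(x)=\dfrac{\mathbb{E}_{y\sim\mathcal N(x,\lambda\delta I)}[y\exp(-f(y)/\delta)]}{\mathbb{E}_{y\sim\mathcal N(x,\lambda\delta I)}[\exp(-f(y)/\delta)]}$, where $\mathcal N(x,\lambda\delta I)$ is the Gaussian with mean $x$ and covariance $\lambda\delta I$. *)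

theory Defs
  imports "HOL-Analysis.Analysis"
begin

definition gauss_density :: "real \<Rightarrow> 'a::euclidean_space \<Rightarrow> 'a \<Rightarrow> real" where
  "gauss_density s x y =
     (2 * pi * s) powr (- real DIM('a) / 2) * exp (- (norm (y - x))\<^sup>2 / (2 * s))"

definition zprox :: "real \<Rightarrow> real \<Rightarrow> ('a::euclidean_space \<Rightarrow> real) \<Rightarrow> 'a \<Rightarrow> 'a" where
  "zprox \<delta> lam f x =
     (1 / (LINT y|lborel. gauss_density (lam * \<delta>) x y * exp (- f y / \<delta>))) *\<^sub>R
     (LINT y|lborel. (gauss_density (lam * \<delta>) x y * exp (- f y / \<delta>)) *\<^sub>R y)"

fun Ck :: "nat \<Rightarrow> ('a::real_normed_vector \<Rightarrow> 'b::real_normed_vector) \<Rightarrow> bool" where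
  "Ck 0 f = continuous_on UNIV f"
| "Ck (Suc k) f = (f differentiable_on UNIV \<and>
      (\<forall>v. Ck k (\<lambda>x. frechet_derivative f (at x) v)))"

definition smooth_map :: "('a::real_normed_vector \<Rightarrow> 'b::real_normed_vector) \<Rightarrow> bool" where
  "smooth_map f = (\<forall>k. Ck k f)"

end

theory Submission
  imports Defs
begin

lemma diffon_UNIV: "f differentiable_on UNIV \<longleftrightarrow> (\<forall>x. f differentiable (at x))"
  by (simp add: differentiable_on_def)

lemma fd_works: "f differentiable (at x) \<Longrightarrow> (f has_derivative frechet_derivative f (at x)) (at x)"
  using frechet_derivative_works by blast

lemma fd_eq: "(f has_derivative D) (at x) \<Longrightarrow> frechet_derivative f (at x) = D"
  using frechet_derivative_at by metis

lemma Ck_cont: "Ck k f \<Longrightarrow> continuous_on UNIV f"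
  by (cases k) (auto intro: differentiable_imp_continuous_on)

lemma Ck_Suc_mono: "Ck (Suc k) f \<Longrightarrow> Ck k f"
proof (induction k arbitrary: f)
  case 0 then show ?case by (auto intro: differentiable_imp_continuous_on)
next
  case (Suc k) then show ?case by (metis Ck.simps(2))
qed

lemma Ck_le: "m \<le> k \<Longrightarrow> Ck k f \<Longrightarrow> Ck m f"
proof (induction k)
  case 0 then show ?case by simp
next
  case (Suc k) then show ?case using Ck_Suc_mono le_Suc_eq by blast
qed

lemma Ck_const: "Ck k (\<lambda>x. c)"
proof (induction k arbitrary: c)
  case 0 then show ?case by simp
next
  case (Suc k)
  have "frechet_derivative (\<lambda>x. c) (at x) = (\<lambda>v. 0)" for x
    by (rule fd_eq) (rule has_derivative_const)
  then show ?case using Suc by (simp add: diffon_UNIV)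
qed

lemma Ck_add:
  fixes f g :: "'a::real_normed_vector \<Rightarrow> 'b::real_normed_vector"
  shows "Ck k f \<Longrightarrow> Ck k g \<Longrightarrow> Ck k (\<lambda>x. f x + g x)"
proof (induction k arbitrary: f g)
  case 0 then show ?case by (simp add: continuous_on_add)
next
  case (Suc k)
  then have df: "\<And>x. f differentiable (at x)" and dg: "\<And>x. g differentiable (at x)"
    by (auto simp: diffon_UNIV)
  have e: "frechet_derivative (\<lambda>x. f x + g x) (at x) =
      (\<lambda>v. frechet_derivative f (at x) v + frechet_derivative g (at x) v)" for x
    by (rule fd_eq) (intro has_derivative_add fd_works df dg)
  show ?case using Suc df dg by (simp add: diffon_UNIV e)
qed

lemma Ck_scaleR:
  fixes a :: "'a::real_normed_vector \<Rightarrow> real" and g :: "'a \<Rightarrow> 'b::real_normed_vector"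
  shows "Ck k a \<Longrightarrow> Ck k g \<Longrightarrow> Ck k (\<lambda>x. a x *\<^sub>R g x)"
proof (induction k arbitrary: a g)
  case 0 then show ?case by (simp add: continuous_on_scaleR)
next
  case (Suc k)
  then have da: "\<And>x. a differentiable (at x)" and dg: "\<And>x. g differentiable (at x)"
    by (auto simp: diffon_UNIV)
  have e: "frechet_derivative (\<lambda>x. a x *\<^sub>R g x) (at x) =
      (\<lambda>v. a x *\<^sub>R frechet_derivative g (at x) v + frechet_derivative a (at x) v *\<^sub>R g x)" for x
    by (rule fd_eq) (intro has_derivative_scaleR fd_works da dg)
  have ka: "Ck k a" and kg: "Ck k g" using Suc.prems Ck_Suc_mono by blast+
  have "Ck k (\<lambda>x. a x *\<^sub>R frechet_derivative g (at x) v + frechet_derivative a (at x) v *\<^sub>R g x)" for v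
    using Suc.prems by (intro Ck_add Suc.IH ka kg) auto
  then show ?case using da dg by (simp add: diffon_UNIV e)
qed

lemma Ck_mult:
  fixes a b :: "'a::real_normed_vector \<Rightarrow> real"
  shows "Ck k a \<Longrightarrow> Ck k b \<Longrightarrow> Ck k (\<lambda>x. a x * b x)"
  using Ck_scaleR[of k a b] by simp

lemma Ck_sum:
  fixes f :: "'i \<Rightarrow> 'a::real_normed_vector \<Rightarrow> 'b::real_normed_vector"
  shows "(\<And>i. i \<in> S \<Longrightarrow> Ck k (f i)) \<Longrightarrow> Ck k (\<lambda>x. \<Sum>i\<in>S. f i x)"
proof (induction S rule: infinite_finite_induct)
  case (infinite S) then show ?case by (simp add: Ck_const)
next
  case empty then show ?case by (simp add: Ck_const)
next
  case (insert i S) then show ?case by (simp add: Ck_add)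
qed

lemma Ck_blin:
  fixes g :: "'a::real_normed_vector \<Rightarrow> 'b::real_normed_vector" and L :: "'b \<Rightarrow> 'c::real_normed_vector"
  assumes L: "bounded_linear L"
  shows "Ck k g \<Longrightarrow> Ck k (\<lambda>x. L (g x))"
proof (induction k arbitrary: g)
  case 0 then show ?case
    using L by (simp add: bounded_linear.continuous_on)
next
  case (Suc k)
  then have dg: "\<And>x. g differentiable (at x)" by (auto simp: diffon_UNIV)
  have e: "frechet_derivative (\<lambda>x. L (g x)) (at x) = (\<lambda>v. L (frechet_derivative g (at x) v))" for x
    by (rule fd_eq) (rule bounded_linear.has_derivative[OF L fd_works[OF dg]])
  have "(\<lambda>x. L (g x)) differentiable (at x)" for x
    using differentiable_chain_at[OF dg bounded_linear_imp_differentiable[OF L]] by (simp add: o_def)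
  then show ?case using Suc by (simp add: diffon_UNIV e)
qed

lemma Ck_inverse:
  fixes a :: "'a::real_normed_vector \<Rightarrow> real"
  shows "Ck k a \<Longrightarrow> (\<And>x. a x \<noteq> 0) \<Longrightarrow> Ck k (\<lambda>x. inverse (a x))"
proof (induction k arbitrary: a)
  case 0 then show ?case by (simp add: continuous_on_inverse)
next
  case (Suc k)
  then have da: "\<And>x. a differentiable (at x)" by (auto simp: diffon_UNIV)
  have e: "frechet_derivative (\<lambda>x. inverse (a x)) (at x) =
     (\<lambda>v. - (inverse (a x) * inverse (a x)) * frechet_derivative a (at x) v)" for x
    by (rule fd_eq) (use Deriv.has_derivative_inverse[OF Suc.prems(2) fd_works[OF da]] in \<open>simp add: mult_ac\<close>)
  have ka: "Ck k a" using Suc.prems Ck_Suc_mono by blast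
  have ki: "Ck k (\<lambda>x. inverse (a x))" using Suc.IH[OF ka Suc.prems(2)] .
  have "Ck k (\<lambda>x. - (inverse (a x) * inverse (a x)) * frechet_derivative a (at x) v)" for v
  proof -
    have "Ck k (\<lambda>x. (-1) * (inverse (a x) * inverse (a x)) * frechet_derivative a (at x) v)"
      using Suc.prems by (intro Ck_mult Ck_const ki) auto
    then show ?thesis by simp
  qed
  moreover have "(\<lambda>x. inverse (a x)) differentiable (at x)" for x
    using da Suc.prems(2) by (intro differentiable_inverse) auto
  ultimately show ?case by (simp add: diffon_UNIV e)
qed

lemma linear_basis_expand:
  fixes L :: "'b::euclidean_space \<Rightarrow> 'c::real_normed_vector"
  assumes "linear L"
  shows "L w = (\<Sum>i\<in>Basis. (w \<bullet> i) *\<^sub>R L i)"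
proof -
  have "L w = L (\<Sum>i\<in>Basis. (w \<bullet> i) *\<^sub>R i)" by (simp add: euclidean_representation)
  also have "\<dots> = (\<Sum>i\<in>Basis. (w \<bullet> i) *\<^sub>R L i)"
    using assms by (simp add: linear_sum linear_scale)
  finally show ?thesis .
qed

lemma Ck_comp:
  fixes \<Phi> :: "'b::euclidean_space \<Rightarrow> 'c::real_normed_vector" and h :: "'a::real_normed_vector \<Rightarrow> 'b"
  shows "Ck k \<Phi> \<Longrightarrow> Ck k h \<Longrightarrow> Ck k (\<lambda>x. \<Phi> (h x))"
proof (induction k arbitrary: \<Phi> h)
  case 0 then show ?case
    by (auto intro: continuous_on_compose2)
next
  case (Suc k)
  then have dP: "\<And>y. \<Phi> differentiable (at y)" and dh: "\<And>x. h differentiable (at x)"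
    by (auto simp: diffon_UNIV)
  have e: "frechet_derivative (\<lambda>x. \<Phi> (h x)) (at x) =
      (\<lambda>v. \<Sum>i\<in>Basis. (frechet_derivative h (at x) v \<bullet> i) *\<^sub>R frechet_derivative \<Phi> (at (h x)) i)" for x
  proof -
    have "frechet_derivative (\<lambda>x. \<Phi> (h x)) (at x) =
        (\<lambda>v. frechet_derivative \<Phi> (at (h x)) (frechet_derivative h (at x) v))"
      by (rule fd_eq) (use diff_chain_at[OF fd_works[OF dh] fd_works[OF dP]] in \<open>simp add: o_def\<close>)
    moreover have "linear (frechet_derivative \<Phi> (at (h x)))"
      using fd_works[OF dP] has_derivative_linear by blast
    ultimately show ?thesis by (simp add: linear_basis_expand[of "frechet_derivative \<Phi> (at (h x))"])
  qed
  have kh: "Ck k h" using Suc.prems Ck_Suc_mono by blast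
  have "Ck k (\<lambda>x. \<Sum>i\<in>Basis. (frechet_derivative h (at x) v \<bullet> i) *\<^sub>R frechet_derivative \<Phi> (at (h x)) i)" for v
  proof (intro Ck_sum Ck_scaleR)
    fix i :: 'b
    show "Ck k (\<lambda>x. frechet_derivative h (at x) v \<bullet> i)"
      using Suc.prems(2) by (intro Ck_blin[where L="\<lambda>z. z \<bullet> i"] bounded_linear_inner_left) auto
    show "Ck k (\<lambda>x. frechet_derivative \<Phi> (at (h x)) i)"
      using Suc.prems(1) by (intro Suc.IH kh) auto
  qed
  moreover have "(\<lambda>x. \<Phi> (h x)) differentiable (at x)" for x
    using differentiable_chain_at[OF dh dP] by (simp add: o_def)
  ultimately show ?case by (simp add: diffon_UNIV e)
qed

locale zs =
  fixes f :: "'a::euclidean_space \<Rightarrow> real" and lam \<delta> :: real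
  assumes lam: "lam > 0" and del: "\<delta> > 0" and fc: "continuous_on UNIV f"
    and fin: "(\<integral>\<^sup>+ y. ennreal (exp (- f y / \<delta>)) \<partial>lborel) < \<infinity>"
begin

definition "s = lam * \<delta>"
definition "nu y = exp (- f y / \<delta>)"
definition "Ew x y = exp (inner x y / s - (norm y ^ 2) / (2 * s)) * nu y"
definition "J p x = (LINT y|lborel. Ew x y *\<^sub>R p y)"
definition "PG p \<longleftrightarrow> continuous_on UNIV p \<and> (\<exists>C n. \<forall>y. norm (p y) \<le> C * (1 + norm y)^n)"
definition "W c n y = exp (c * norm y) * (1 + norm y)^n * exp (-(norm y ^ 2)/(2 * s)) * nu y"

lemma s_pos: "s > 0" using lam del by (simp add: s_def)

lemma nu_pos: "nu y > 0" by (simp add: nu_def)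

lemma nu_cont: "continuous_on UNIV nu"
  unfolding nu_def using del by (intro continuous_intros fc) auto

lemma cont_meas: "continuous_on UNIV g \<Longrightarrow> g \<in> borel_measurable lborel"
  by (simp add: borel_measurable_continuous_onI)

lemma nu_int: "integrable lborel nu"
  using fin by (intro integrableI_nonneg cont_meas nu_cont) (auto simp: nu_def less_imp_le)

lemma E_cont: "continuous_on UNIV (Ew x)"
  unfolding Ew_def by (intro continuous_intros nu_cont) (use s_pos in auto)

lemma E_pos: "Ew x y > 0" by (simp add: Ew_def nu_pos)

lemma poly_exp_bound:
  fixes c :: real and n :: nat
  shows "\<exists>K. \<forall>r\<ge>0. exp (c*r) * (1+r)^n * exp (-(r^2)/(2 * s)) \<le> K"
proof (intro exI allI impI)
  fix r :: real assume r: "r \<ge> 0"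
  have "(1+r)^n \<le> exp r ^ n"
    using r by (intro power_mono) (auto simp: exp_ge_add_one_self)
  also have "\<dots> = exp (real n * r)" by (simp add: exp_of_nat_mult)
  finally have 1: "(1+r)^n \<le> exp (real n * r)" .
  have 2: "(c + n) * r - r^2/(2 * s) \<le> s * (c+n)^2/2"
  proof -
    have "0 \<le> (r - s*(c+n))^2" by simp
    then have "0 \<le> r^2 - 2* s*(c+n)*r + s^2*(c+n)^2" by (simp add: power2_eq_square algebra_simps)
    then show ?thesis using s_pos by (simp add: field_simps power2_eq_square)
  qed
  have "exp (c*r) * (1+r)^n * exp (-(r^2)/(2 * s)) \<le> exp (c*r) * exp (real n * r) * exp (-(r^2)/(2 * s))"
    using 1 by (intro mult_right_mono mult_left_mono) auto
  also have "\<dots> = exp ((c + n) * r - r^2/(2 * s))" by (simp add: exp_add[symmetric] exp_diff algebra_simps)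
  also have "\<dots> \<le> exp (s * (c+n)^2/2)" using 2 by simp
  finally show "exp (c*r) * (1+r)^n * exp (-(r^2)/(2 * s)) \<le> exp (s * (c+n)^2/2)" .
qed

lemma W_nonneg: "W c n y \<ge> 0" by (simp add: W_def nu_pos less_imp_le)

lemma W_cont: "continuous_on UNIV (W c n)"
  unfolding W_def by (intro continuous_intros nu_cont) (use s_pos in auto)

lemma W_int: "integrable lborel (W c n)"
proof -
  obtain K where K: "\<And>r. r \<ge> 0 \<Longrightarrow> exp (c*r) * (1+r)^n * exp (-(r^2)/(2 * s)) \<le> K"
    using poly_exp_bound by blast
  show ?thesis
  proof (rule Bochner_Integration.integrable_bound[where f="\<lambda>y. K * nu y"])
    show "integrable lborel (\<lambda>y. K * nu y)" using nu_int by simp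
    show "W c n \<in> borel_measurable lborel" by (rule cont_meas[OF W_cont])
    show "AE y in lborel. norm (W c n y) \<le> norm (K * nu y)"
    proof (rule AE_I2)
      fix y
      have "W c n y = (exp (c*norm y) * (1+norm y)^n * exp (-(norm y ^ 2)/(2 * s))) * nu y"
        by (simp add: W_def)
      also have "\<dots> \<le> K * nu y" using K[of "norm y"] nu_pos[of y]
        by (intro mult_right_mono) auto
      finally have "W c n y \<le> K * nu y" .
      then show "norm (W c n y) \<le> norm (K * nu y)" using W_nonneg[of c n y] by simp
    qed
  qed
qed

lemma E_le: "Ew x y \<le> exp (norm x / s * norm y) * exp (-(norm y ^ 2)/(2 * s)) * nu y"
proof -
  have "inner x y / s \<le> norm x / s * norm y"
    using norm_cauchy_schwarz[of x y] s_pos by (simp add: divide_right_mono)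
  then have "exp (inner x y / s - (norm y ^ 2) / (2 * s)) \<le> exp (norm x / s * norm y) * exp (-(norm y ^ 2)/(2 * s))"
    by (simp add: exp_add[symmetric])
  then show ?thesis unfolding Ew_def using nu_pos[of y] by (intro mult_right_mono) auto
qed

lemma PG_int:
  fixes p :: "'a \<Rightarrow> 'b::{banach,second_countable_topology}"
  assumes "PG p"
  shows "integrable lborel (\<lambda>y. Ew x y *\<^sub>R p y)"
proof -
  obtain C n where C: "\<And>y. norm (p y) \<le> C * (1 + norm y)^n" and pc: "continuous_on UNIV p"
    using assms unfolding PG_def by blast
  show ?thesis
  proof (rule Bochner_Integration.integrable_bound[where f="\<lambda>y. C * W (norm x / s) n y"])
    show "integrable lborel (\<lambda>y. C * W (norm x / s) n y)" using W_int by simp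
    show "(\<lambda>y. Ew x y *\<^sub>R p y) \<in> borel_measurable lborel"
      by (intro cont_meas continuous_intros E_cont pc)
    show "AE y in lborel. norm (Ew x y *\<^sub>R p y) \<le> norm (C * W (norm x / s) n y)"
    proof (rule AE_I2)
      fix y
      have "norm (Ew x y *\<^sub>R p y) = Ew x y * norm (p y)" using E_pos[of x y] by simp
      also have "\<dots> \<le> (exp (norm x / s * norm y) * exp (-(norm y ^ 2)/(2 * s)) * nu y) * (C * (1 + norm y)^n)"
        using E_le[of x y] C[of y] E_pos[of x y] by (intro mult_mono) auto
      also have "\<dots> = C * W (norm x / s) n y" by (simp add: W_def)
      finally show "norm (Ew x y *\<^sub>R p y) \<le> norm (C * W (norm x / s) n y)" by simp
    qed
  qed
qed

end

context zs begin
lemma exp_taylor2: "\<bar>exp (t::real) - 1 - t\<bar> \<le> t^2 * exp \<bar>t\<bar>"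
proof -
  obtain u where u: "\<bar>u\<bar> \<le> \<bar>t\<bar>" "exp t = (\<Sum>m<2. t ^ m / fact m) + exp u / fact 2 * t ^ 2"
    using Maclaurin_exp_le[of t 2] by blast
  have e1: "exp t - 1 - t = (exp u * t ^ 2) / 2" using u(2) by (simp add: numeral_2_eq_2)
  have "exp u \<le> exp \<bar>t\<bar>" using u(1) by simp
  then have a: "exp u * t ^ 2 \<le> exp \<bar>t\<bar> * t^2"
    by (intro mult_right_mono) auto
  have b: "0 \<le> exp u * t^2" by simp
  have "\<bar>exp t - 1 - t\<bar> \<le> exp \<bar>t\<bar> * t^2" unfolding e1 using a b by linarith
  then show ?thesis by (simp add: mult.commute)
qed

lemma PG_C_nonneg: "(\<And>y. norm (p y) \<le> C * (1 + norm y)^n) \<Longrightarrow> C \<ge> 0"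
proof -
  assume "\<And>y. norm (p y) \<le> C * (1 + norm y)^n"
  from this[of 0] show "C \<ge> 0" using norm_ge_zero[of "p 0"] by (simp del: norm_ge_zero)
qed

lemma PG_mult_inner:
  fixes p :: "'a \<Rightarrow> 'b::real_normed_vector"
  assumes "PG p"
  shows "PG (\<lambda>y. (inner h y / s) *\<^sub>R p y)"
proof -
  obtain C n where C: "\<And>y. norm (p y) \<le> C * (1 + norm y)^n" and pc: "continuous_on UNIV p"
    using assms unfolding PG_def by blast
  have C0: "C \<ge> 0" using PG_C_nonneg C by blast
  have "norm ((inner h y / s) *\<^sub>R p y) \<le> (norm h * C / s) * (1 + norm y)^(Suc n)" for y
  proof -
    have "norm ((inner h y / s) *\<^sub>R p y) = \<bar>inner h y\<bar> / s * norm (p y)" using s_pos by simp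
    also have "\<dots> \<le> (norm h * (1 + norm y)) / s * (C * (1 + norm y)^n)"
    proof (intro mult_mono divide_right_mono C)
      show "\<bar>inner h y\<bar> \<le> norm h * (1 + norm y)"
      proof -
        have "norm h * norm y \<le> norm h * (1 + norm y)" by (intro mult_left_mono) auto
        then show ?thesis using Cauchy_Schwarz_ineq2[of h y] by linarith
      qed
    qed (use s_pos C0 in auto)
    also have "\<dots> = (norm h * C / s) * (1 + norm y)^(Suc n)" by (simp add: field_simps)
    finally show ?thesis .
  qed
  moreover have "continuous_on UNIV (\<lambda>y. (inner h y / s) *\<^sub>R p y)"
    by (intro continuous_intros pc) (use s_pos in auto)
  ultimately show ?thesis unfolding PG_def by blast
qed

lemma J_linear:
  fixes p :: "'a \<Rightarrow> 'b::{banach,second_countable_topology}"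
  assumes "PG p"
  shows "bounded_linear (\<lambda>h. J (\<lambda>y. (inner h y / s) *\<^sub>R p y) x)"
proof -
  have int: "integrable lborel (\<lambda>y. Ew x y *\<^sub>R ((inner h y / s) *\<^sub>R p y))" for h
    by (rule PG_int[OF PG_mult_inner[OF assms]])
  have "linear (\<lambda>h. J (\<lambda>y. (inner h y / s) *\<^sub>R p y) x)"
  proof (rule linearI)
    fix a b :: 'a
    have "(\<lambda>y. Ew x y *\<^sub>R ((inner (a + b) y / s) *\<^sub>R p y)) =
        (\<lambda>y. Ew x y *\<^sub>R ((inner a y / s) *\<^sub>R p y) + Ew x y *\<^sub>R ((inner b y / s) *\<^sub>R p y))"
      by (simp add: inner_add_left add_divide_distrib scaleR_add_left scaleR_add_right)
    then show "J (\<lambda>y. (inner (a + b) y / s) *\<^sub>R p y) x =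
        J (\<lambda>y. (inner a y / s) *\<^sub>R p y) x + J (\<lambda>y. (inner b y / s) *\<^sub>R p y) x"
      unfolding J_def using int by (simp add: Bochner_Integration.integral_add)
  next
    fix c :: real and a :: 'a
    have pw: "Ew x y *\<^sub>R ((inner (c *\<^sub>R a) y / s) *\<^sub>R p y) = c *\<^sub>R (Ew x y *\<^sub>R ((inner a y / s) *\<^sub>R p y))" for y
      by (simp add: scaleR_scaleR mult_ac)
    show "J (\<lambda>y. (inner (c *\<^sub>R a) y / s) *\<^sub>R p y) x = c *\<^sub>R J (\<lambda>y. (inner a y / s) *\<^sub>R p y) x"
      unfolding J_def by (simp only: pw integral_scaleR_right)
  qed
  then show ?thesis by (simp add: linear_conv_bounded_linear)
qed

end

context zs begin
lemma J_remainder: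
  fixes p :: "'a \<Rightarrow> 'b::{banach,second_countable_topology}"
  assumes "PG p"
  shows "\<exists>K\<ge>0. \<forall>h. norm h \<le> 1 \<longrightarrow>
     norm (J p (x + h) - J p x - J (\<lambda>y. (inner h y / s) *\<^sub>R p y) x) \<le> K * (norm h)^2"
proof -
  obtain C n where C: "\<And>y. norm (p y) \<le> C * (1 + norm y)^n" and pc: "continuous_on UNIV p"
    using assms unfolding PG_def by blast
  have C0: "C \<ge> 0" using PG_C_nonneg C by blast
  define c where "c = (norm x + 1) / s"
  define K where "K = C / s^2 * (LINT y|lborel. W c (n+2) y)"
  have K0: "K \<ge> 0" unfolding K_def using C0 s_pos W_nonneg
    by (intro mult_nonneg_nonneg divide_nonneg_nonneg integral_nonneg_AE) auto
  show ?thesis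
  proof (intro exI[of _ K] conjI allI impI K0)
    fix h :: 'a assume h: "norm h \<le> 1"
    define t where "t y = inner h y / s" for y
    have eq: "Ew (x + h) y *\<^sub>R p y - Ew x y *\<^sub>R p y - Ew x y *\<^sub>R ((inner h y / s) *\<^sub>R p y)
        = (Ew x y * (exp (t y) - 1 - t y)) *\<^sub>R p y" for y
    proof -
      have "inner (x+h) y / s - norm y ^ 2 / (2 * s) = (inner x y / s - norm y ^ 2 / (2 * s)) + inner h y / s"
        by (simp add: inner_add_left add_divide_distrib)
      then have "Ew (x + h) y = exp ((inner x y / s - norm y ^ 2 / (2 * s)) + inner h y / s) * nu y"
        unfolding Ew_def by (simp only:)
      also have "\<dots> = Ew x y * exp (inner h y / s)" unfolding Ew_def exp_add by simp
      finally have "Ew (x + h) y = Ew x y * exp (inner h y / s)" .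
      then show ?thesis unfolding t_def by (simp add: scaleR_diff_left right_diff_distrib)
    qed
    have i1: "integrable lborel (\<lambda>y. Ew (x + h) y *\<^sub>R p y)" by (rule PG_int[OF assms])
    have i2: "integrable lborel (\<lambda>y. Ew x y *\<^sub>R p y)" by (rule PG_int[OF assms])
    have i3: "integrable lborel (\<lambda>y. Ew x y *\<^sub>R ((inner h y / s) *\<^sub>R p y))"
      by (rule PG_int[OF PG_mult_inner[OF assms]])
    have "J p (x + h) - J p x - J (\<lambda>y. (inner h y / s) *\<^sub>R p y) x =
        (LINT y|lborel. Ew (x + h) y *\<^sub>R p y - Ew x y *\<^sub>R p y - Ew x y *\<^sub>R ((inner h y / s) *\<^sub>R p y))"
      unfolding J_def using i1 i2 i3 by simp
    also have "\<dots> = (LINT y|lborel. (Ew x y * (exp (t y) - 1 - t y)) *\<^sub>R p y)"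
      by (simp only: eq)
    finally have JE: "J p (x + h) - J p x - J (\<lambda>y. (inner h y / s) *\<^sub>R p y) x =
        (LINT y|lborel. (Ew x y * (exp (t y) - 1 - t y)) *\<^sub>R p y)" .
    have iR: "integrable lborel (\<lambda>y. (Ew x y * (exp (t y) - 1 - t y)) *\<^sub>R p y)"
      using Bochner_Integration.integrable_diff[OF Bochner_Integration.integrable_diff[OF i1 i2] i3]
      by (simp only: eq)
    have pt: "norm ((Ew x y * (exp (t y) - 1 - t y)) *\<^sub>R p y) \<le> (norm h)^2 * (C / s^2 * W c (n+2) y)" for y
    proof -
      have at: "\<bar>t y\<bar> \<le> norm h * norm y / s"
      proof -
        have "\<bar>t y\<bar> = \<bar>inner h y\<bar> / s" unfolding t_def using s_pos by simp
        also have "\<dots> \<le> norm h * norm y / s"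
          by (rule divide_right_mono[OF Cauchy_Schwarz_ineq2]) (use s_pos in simp)
        finally show ?thesis .
      qed
      have "norm h * norm y \<le> norm y" using h by (intro mult_left_le_one_le) auto
      then have "norm h * norm y / s \<le> norm y / s" by (rule divide_right_mono) (use s_pos in simp)
      then have at1: "\<bar>t y\<bar> \<le> norm y / s" using at by linarith
      have t2: "(t y)^2 \<le> (norm h)^2 * (1 + norm y)^2 / s^2"
      proof -
        have "(t y)^2 = \<bar>t y\<bar>^2" by simp
        also have "\<dots> \<le> (norm h * norm y / s)^2" using at by (intro power_mono) auto
        also have "\<dots> = (norm h)^2 * (norm y)^2 / s^2" by (simp add: power_mult_distrib power_divide)
        also have "\<dots> \<le> (norm h)^2 * (1 + norm y)^2 / s^2"
        proof -
          have "(norm y)^2 \<le> (1+norm y)^2" by (rule power_mono) auto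
          then show ?thesis by (intro divide_right_mono mult_left_mono) auto
        qed
        finally show ?thesis .
      qed
      have "norm ((Ew x y * (exp (t y) - 1 - t y)) *\<^sub>R p y) = Ew x y * \<bar>exp (t y) - 1 - t y\<bar> * norm (p y)"
        using E_pos[of x y] by (simp add: abs_mult)
      also have "\<dots> \<le> (exp (norm x / s * norm y) * exp (-(norm y ^ 2)/(2 * s)) * nu y)
            * ((norm h)^2 * (1 + norm y)^2 / s^2 * exp (norm y / s)) * (C * (1 + norm y)^n)"
      proof -
        have b: "\<bar>exp (t y) - 1 - t y\<bar> \<le> (norm h)^2 * (1 + norm y)^2 / s^2 * exp (norm y / s)"
        proof -
          have "(t y)^2 * exp \<bar>t y\<bar> \<le> ((norm h)^2 * (1 + norm y)^2 / s^2) * exp (norm y / s)"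
            by (rule mult_mono[OF t2]) (use at1 in auto)
          then show ?thesis using exp_taylor2[of "t y"] by linarith
        qed
        show ?thesis
          by (rule mult_mono[OF mult_mono[OF E_le b] C]) (use E_pos[of x y] nu_pos[of y] in auto)
      qed
      also have "\<dots> = (norm h)^2 * (C / s^2 * W c (n+2) y)"
      proof -
        have e1: "exp (c * norm y) = exp (norm x / s * norm y) * exp (norm y / s)"
          unfolding c_def by (simp add: exp_add[symmetric] add_divide_distrib algebra_simps)
        have e2: "(1 + norm y)^(n+2) = (1 + norm y)^2 * (1 + norm y)^n" by (metis power_add mult.commute)
        show ?thesis unfolding W_def e1 e2 by (simp add: mult_ac)
      qed
      finally show ?thesis .
    qed
    have "norm (J p (x + h) - J p x - J (\<lambda>y. (inner h y / s) *\<^sub>R p y) x) \<le>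
        (LINT y|lborel. norm ((Ew x y * (exp (t y) - 1 - t y)) *\<^sub>R p y))"
      unfolding JE by (rule integral_norm_bound)
    also have "\<dots> \<le> (LINT y|lborel. (norm h)^2 * (C / s^2 * W c (n+2) y))"
      by (rule integral_mono[OF integrable_norm[OF iR]]) (use W_int pt in auto)
    also have "\<dots> = K * (norm h)^2" unfolding K_def by simp
    finally show "norm (J p (x + h) - J p x - J (\<lambda>y. (inner h y / s) *\<^sub>R p y) x) \<le> K * (norm h)^2" .
  qed
qed

end

context zs begin
lemma J_deriv:
  fixes p :: "'a \<Rightarrow> 'b::{banach,second_countable_topology}"
  assumes "PG p"
  shows "(J p has_derivative (\<lambda>h. J (\<lambda>y. (inner h y / s) *\<^sub>R p y) x)) (at x)"
proof -
  obtain K where K0: "K \<ge> 0" and K: "\<And>h. norm h \<le> 1 \<Longrightarrow>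
     norm (J p (x + h) - J p x - J (\<lambda>y. (inner h y / s) *\<^sub>R p y) x) \<le> K * (norm h)^2"
    using J_remainder[OF assms, of x] by blast
  show ?thesis unfolding has_derivative_at_alt
  proof (intro conjI J_linear assms allI impI)
    fix e :: real assume e: "e > 0"
    show "\<exists>d>0. \<forall>y. norm (y - x) < d \<longrightarrow>
        norm (J p y - J p x - J (\<lambda>ya. (inner (y - x) ya / s) *\<^sub>R p ya) x) \<le> e * norm (y - x)"
    proof (intro exI[of _ "min 1 (e / (K + 1))"] conjI allI impI)
      show "min 1 (e / (K + 1)) > 0" using e K0 by simp
      fix y assume y: "norm (y - x) < min 1 (e / (K + 1))"
      have "norm (J p y - J p x - J (\<lambda>ya. (inner (y - x) ya / s) *\<^sub>R p ya) x) \<le> K * (norm (y - x))^2"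
        using K[of "y - x"] y by simp
      also have "\<dots> = (K * norm (y - x)) * norm (y - x)" by (simp add: power2_eq_square)
      also have "\<dots> \<le> e * norm (y - x)"
      proof (rule mult_right_mono)
        have "K * norm (y - x) \<le> K * (e / (K + 1))" using y K0 by (intro mult_left_mono) auto
        also have "\<dots> \<le> e" using K0 e by (simp add: field_simps)
        finally show "K * norm (y - x) \<le> e" .
      qed simp
      finally show "norm (J p y - J p x - J (\<lambda>ya. (inner (y - x) ya / s) *\<^sub>R p ya) x) \<le> e * norm (y - x)" .
    qed
  qed
qed

lemma J_smooth:
  fixes p :: "'a \<Rightarrow> 'b::{banach,second_countable_topology}"
  shows "PG p \<Longrightarrow> Ck k (J p)"
proof (induction k arbitrary: p)
  case 0
  have "\<And>x. J p differentiable (at x)" using J_deriv[OF 0] differentiable_def by blast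
  then show ?case by (simp add: differentiable_imp_continuous_on diffon_UNIV)
next
  case (Suc k)
  have d: "\<And>x. J p differentiable (at x)" using J_deriv[OF Suc.prems] differentiable_def by blast
  have e: "frechet_derivative (J p) (at x) = (\<lambda>h. J (\<lambda>y. (inner h y / s) *\<^sub>R p y) x)" for x
    by (rule fd_eq[OF J_deriv[OF Suc.prems]])
  show ?case using d by (simp add: diffon_UNIV e Suc.IH PG_mult_inner Suc.prems)
qed

end

context zs begin

definition "F x = (1 / J (\<lambda>_. 1::real) x) *\<^sub>R J (\<lambda>y. y) x"

lemma PG_const: "PG (\<lambda>_. c)"
  unfolding PG_def by (intro conjI continuous_intros exI[of _ "norm c"] exI[of _ 0]) auto

lemma PG_id: "PG (\<lambda>y. y)"
  unfolding PG_def by (intro conjI continuous_intros exI[of _ 1] exI[of _ 1]) auto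

lemma J1_eq: "J (\<lambda>_. 1::real) x = (LINT y|lborel. Ew x y)"
  unfolding J_def by simp

lemma Ew_int: "integrable lborel (Ew x)"
  using PG_int[OF PG_const[of "1::real"], of x] by simp

lemma ball_lower:
  fixes g :: "'a \<Rightarrow> real"
  assumes gi: "integrable lborel g" and g0: "\<And>y. g y \<ge> 0" and m0: "m \<ge> 0"
    and gm: "\<And>y. y \<in> ball c r \<Longrightarrow> g y \<ge> m"
  shows "(LINT y|lborel. g y) \<ge> m * measure lborel (ball c r)"
proof -
  have ii: "integrable lborel (\<lambda>y. m * indicator (ball c r) y)"
    using emeasure_lborel_ball_finite[of c r] by (intro integrable_mult_right integrable_real_indicator) auto
  have "(LINT y|lborel. m * indicator (ball c r) y) \<le> (LINT y|lborel. g y)"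
    by (rule integral_mono[OF ii gi]) (use g0 gm m0 in \<open>auto simp: indicator_def\<close>)
  then show ?thesis by simp
qed

lemma pos_integral:
  fixes g :: "'a \<Rightarrow> real"
  assumes gi: "integrable lborel g" and g0: "\<And>y. g y \<ge> 0" and gc: "continuous_on UNIV g"
    and ga: "g a > 0"
  shows "(LINT y|lborel. g y) > 0"
proof -
  have "continuous (at a) g" using gc by (simp add: continuous_on_eq_continuous_at)
  then obtain r where r: "r > 0" "\<And>y. dist y a < r \<Longrightarrow> dist (g y) (g a) < g a / 2"
    using ga unfolding continuous_at_eps_delta by (metis half_gt_zero)
  have "g y \<ge> g a / 2" if "y \<in> ball a r" for y
  proof -
    have "dist y a < r" using that by (simp add: dist_commute)
    then have "\<bar>g y - g a\<bar> < g a / 2" using r(2) by (simp add: dist_real_def)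
    then show ?thesis by linarith
  qed
  then have "(LINT y|lborel. g y) \<ge> g a / 2 * measure lborel (ball a r)"
    using ga by (intro ball_lower gi g0) auto
  moreover have "g a / 2 * measure lborel (ball a r) > 0"
    using content_ball_pos[OF r(1)] ga by (intro mult_pos_pos) auto
  ultimately show ?thesis by linarith
qed

lemma J1_pos: "J (\<lambda>_. 1::real) x > 0"
  unfolding J1_eq using Ew_int E_cont E_pos
  by (intro pos_integral[where a=0]) (auto intro: less_imp_le)

lemma F_smooth: "Ck k F"
proof -
  have "Ck k (\<lambda>x. inverse (J (\<lambda>_. 1::real) x) *\<^sub>R J (\<lambda>y. y) x)"
    by (intro Ck_scaleR Ck_inverse J_smooth PG_const PG_id) (use J1_pos in \<open>auto simp: less_le\<close>)
  then show ?thesis unfolding F_def[abs_def] by (simp add: divide_inverse)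
qed

lemma norm_diff_sq: "(norm (y - (x::'a)))^2 = norm y ^ 2 - 2 * inner x y + norm x ^ 2"
  by (simp add: power2_norm_eq_inner inner_diff_left inner_diff_right inner_commute)

lemma zprox_eq: "zprox \<delta> lam f = F"
proof
  fix x :: 'a
  define \<kappa> where "\<kappa> = (2 * pi * s) powr (- real DIM('a) / 2) * exp (- (norm x ^ 2) / (2 * s))"
  have k0: "\<kappa> \<noteq> 0" unfolding \<kappa>_def using s_pos by simp
  have pw: "gauss_density (lam * \<delta>) x y * exp (- f y / \<delta>) = \<kappa> * Ew x y" for y
  proof -
    have "- (norm (y - x))\<^sup>2 / (2 * s) = (inner x y / s - norm y ^ 2 / (2 * s)) + (- (norm x ^ 2) / (2 * s))"
      unfolding norm_diff_sq using s_pos by (simp add: field_simps)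
    then have "exp (- (norm (y - x))\<^sup>2 / (2 * s)) = exp (inner x y / s - norm y ^ 2 / (2 * s)) * exp (- (norm x ^ 2) / (2 * s))"
      by (simp add: exp_add[symmetric])
    then show ?thesis unfolding gauss_density_def Ew_def \<kappa>_def nu_def s_def[symmetric]
      by (simp add: mult_ac)
  qed
  have "zprox \<delta> lam f x = (1 / (LINT y|lborel. \<kappa> * Ew x y)) *\<^sub>R (LINT y|lborel. (\<kappa> * Ew x y) *\<^sub>R y)"
    unfolding zprox_def pw by simp
  also have "\<dots> = (1 / (\<kappa> * J (\<lambda>_. 1::real) x)) *\<^sub>R (\<kappa> *\<^sub>R J (\<lambda>y. y) x)"
  proof -
    have "(\<lambda>y. (\<kappa> * Ew x y) *\<^sub>R y) = (\<lambda>y. \<kappa> *\<^sub>R (Ew x y *\<^sub>R y))" by simp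
    then show ?thesis unfolding J1_eq J_def by (simp only: integral_scaleR_right integral_mult_right_zero)
  qed
  also have "\<dots> = F x" unfolding F_def using k0 by simp
  finally show "zprox \<delta> lam f x = F x" .
qed

end

context zs begin

definition "Z x = J (\<lambda>_. 1::real) x"
definition "N x = J (\<lambda>y. y) x"
definition "DZ x u = J (\<lambda>y. (inner u y / s) *\<^sub>R (1::real)) x"
definition "DN x u = J (\<lambda>y. (inner u y / s) *\<^sub>R y) x"
definition "DF x u = inverse (Z x) *\<^sub>R DN x u + (- (inverse (Z x) * DZ x u * inverse (Z x))) *\<^sub>R N x"

lemma Z_pos: "Z x > 0" unfolding Z_def by (rule J1_pos)

lemma F_alt: "F x = inverse (Z x) *\<^sub>R N x"
  unfolding F_def Z_def N_def by (simp add: divide_inverse)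

lemma F_deriv: "(F has_derivative DF x) (at x)"
proof -
  have dZ: "(Z has_derivative DZ x) (at x)"
    unfolding Z_def[abs_def] DZ_def by (rule J_deriv[OF PG_const])
  have dN: "(N has_derivative DN x) (at x)"
    unfolding N_def[abs_def] DN_def by (rule J_deriv[OF PG_id])
  have "((\<lambda>x. inverse (Z x) *\<^sub>R N x) has_derivative DF x) (at x)"
    unfolding DF_def
    by (rule has_derivative_scaleR[OF Deriv.has_derivative_inverse[OF _ dZ] dN])
      (use Z_pos[of x] in simp)
  then show ?thesis unfolding F_alt[abs_def] .
qed

lemma DF_linear: "linear (DF x)"
  using F_deriv has_derivative_linear by blast

lemma DF_pos:
  assumes u: "u \<noteq> 0"
  shows "inner (DF x u) u > 0"
proof -
  define t where "t y = inner u y / s" for y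
  have it0: "integrable lborel (Ew x)" by (rule Ew_int)
  have it1: "integrable lborel (\<lambda>y. Ew x y * t y)"
    using PG_int[OF PG_mult_inner[OF PG_const[of "1::real"], of u], of x] by (simp add: t_def)
  have it2: "integrable lborel (\<lambda>y. Ew x y * (t y * t y))"
    using PG_int[OF PG_mult_inner[OF PG_mult_inner[OF PG_const[of "1::real"], of u], of u], of x]
    by (simp add: t_def mult_ac)
  define a1 where "a1 = (LINT y|lborel. Ew x y * t y)"
  define a2 where "a2 = (LINT y|lborel. Ew x y * (t y * t y))"
  have Zeq: "Z x = (LINT y|lborel. Ew x y)" unfolding Z_def by (rule J1_eq)
  have DZeq: "DZ x u = a1" unfolding DZ_def J_def a1_def t_def by simp
  have Neq: "inner (N x) u = s * a1"
  proof -
    have iN: "integrable lborel (\<lambda>y. Ew x y *\<^sub>R y)"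
      using PG_int[OF PG_id, of x] by simp
    have "inner (N x) u = (LINT y|lborel. inner (Ew x y *\<^sub>R y) u)"
      unfolding N_def J_def using integral_inner_left[of u lborel "\<lambda>y. Ew x y *\<^sub>R y"] iN by simp
    also have "\<dots> = (LINT y|lborel. s * (Ew x y * t y))"
      unfolding t_def using s_pos by (simp add: inner_commute)
    finally show ?thesis unfolding a1_def by simp
  qed
  have DNeq: "inner (DN x u) u = s * a2"
  proof -
    have iN: "integrable lborel (\<lambda>y. Ew x y *\<^sub>R ((inner u y / s) *\<^sub>R y))"
      using PG_int[OF PG_mult_inner[OF PG_id, of u], of x] by simp
    have "inner (DN x u) u = (LINT y|lborel. inner (Ew x y *\<^sub>R ((inner u y / s) *\<^sub>R y)) u)"
      unfolding DN_def J_def using integral_inner_left[of u lborel "\<lambda>y. Ew x y *\<^sub>R ((inner u y / s) *\<^sub>R y)"] iN by simp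
    also have "\<dots> = (LINT y|lborel. s * (Ew x y * (t y * t y)))"
      unfolding t_def using s_pos by (simp add: inner_commute mult_ac)
    finally show ?thesis unfolding a2_def by simp
  qed
  define m where "m = a1 / Z x"
  have Z0: "Z x > 0" by (rule Z_pos)
  define V where "V = (LINT y|lborel. Ew x y * (t y - m)^2)"
  have Veq: "V = a2 - 2 * m * a1 + m^2 * Z x"
  proof -
    have "(\<lambda>y. Ew x y * (t y - m)^2) = (\<lambda>y. Ew x y * (t y * t y) - (2 * m) * (Ew x y * t y) + m^2 * Ew x y)"
      by (simp add: fun_eq_iff power2_eq_square algebra_simps)
    then show ?thesis unfolding V_def a1_def a2_def Zeq using it0 it1 it2 by simp
  qed
  have Vpos: "V > 0"
  proof -
    define a0 where "a0 = (s * (m + 1) / (norm u)^2) *\<^sub>R u"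
    have "t a0 = m + 1" unfolding t_def a0_def using u s_pos
      by (simp add: power2_norm_eq_inner)
    then have "Ew x a0 * (t a0 - m)^2 > 0" using E_pos[of x a0] by simp
    moreover have "integrable lborel (\<lambda>y. Ew x y * (t y - m)^2)"
    proof -
      have "(\<lambda>y. Ew x y * (t y - m)^2) = (\<lambda>y. Ew x y * (t y * t y) - (2 * m) * (Ew x y * t y) + m^2 * Ew x y)"
        by (simp add: fun_eq_iff power2_eq_square algebra_simps)
      then show ?thesis using it0 it1 it2 by simp
    qed
    moreover have "continuous_on UNIV (\<lambda>y. Ew x y * (t y - m)^2)"
      unfolding t_def by (intro continuous_intros E_cont) (use s_pos in auto)
    ultimately show ?thesis unfolding V_def
      by (intro pos_integral[where a=a0]) (auto intro!: mult_nonneg_nonneg less_imp_le[OF E_pos])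
  qed
  have "inner (DF x u) u = inverse (Z x) * (s * a2) - inverse (Z x) * a1 * inverse (Z x) * (s * a1)"
    unfolding DF_def inner_add_left inner_scaleR_left DZeq Neq DNeq by simp
  also have "\<dots> = s * V / Z x"
    unfolding Veq m_def using Z0 by (simp add: field_simps power2_eq_square)
  finally show ?thesis using Vpos Z0 s_pos by simp
qed

lemma DF_inj: "inj (DF x)"
proof -
  have "DF x u = 0 \<Longrightarrow> u = 0" for u
    using DF_pos[of u x] by (cases "u = 0") auto
  then show ?thesis using DF_linear[of x] by (simp add: linear_injective_0)
qed

lemma F_inj: "inj F"
proof (rule injI)
  fix x1 x2 assume eq: "F x1 = F x2"
  show "x1 = x2"
  proof (rule ccontr)
    assume ne: "x1 \<noteq> x2"
    define u where "u = x2 - x1"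
    have u0: "u \<noteq> 0" using ne by (simp add: u_def)
    define \<phi> where "\<phi> \<tau> = inner (F (x1 + \<tau> *\<^sub>R u)) u" for \<tau> :: real
    have der: "(\<phi> has_real_derivative inner (DF (x1 + \<tau> *\<^sub>R u) u) u) (at \<tau>)" for \<tau>
    proof -
      have l: "((\<lambda>\<tau>. x1 + \<tau> *\<^sub>R u) has_derivative (\<lambda>h. h *\<^sub>R u)) (at \<tau>)"
        by (auto intro!: derivative_eq_intros)
      have "((\<lambda>\<tau>. F (x1 + \<tau> *\<^sub>R u)) has_derivative (\<lambda>h. DF (x1 + \<tau> *\<^sub>R u) (h *\<^sub>R u))) (at \<tau>)"
        using diff_chain_at[OF l F_deriv] by (simp add: o_def)
      then have "(\<phi> has_derivative (\<lambda>h. inner (DF (x1 + \<tau> *\<^sub>R u) (h *\<^sub>R u)) u)) (at \<tau>)"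
        unfolding \<phi>_def[abs_def] by (rule bounded_linear.has_derivative[OF bounded_linear_inner_left])
      moreover have "(\<lambda>h. inner (DF (x1 + \<tau> *\<^sub>R u) (h *\<^sub>R u)) u) = (\<lambda>h. inner (DF (x1 + \<tau> *\<^sub>R u) u) u * h)"
        using linear_scale[OF DF_linear] by (simp add: fun_eq_iff)
      ultimately show ?thesis by (simp add: has_field_derivative_def)
    qed
    have "\<phi> 0 < \<phi> 1"
      by (rule DERIV_pos_imp_increasing) (use der DF_pos[OF u0] in auto)
    moreover have "\<phi> 1 = \<phi> 0" unfolding \<phi>_def u_def using eq by simp
    ultimately show False by simp
  qed
qed

end

context zs begin

lemma N_inner: "inner (N x) h = s * DZ x h"
proof -
  have iN: "integrable lborel (\<lambda>y. Ew x y *\<^sub>R y)" using PG_int[OF PG_id, of x] by simp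
  have "inner (N x) h = (LINT y|lborel. inner (Ew x y *\<^sub>R y) h)"
    unfolding N_def J_def using integral_inner_left[of h lborel "\<lambda>y. Ew x y *\<^sub>R y"] iN by simp
  also have "\<dots> = (LINT y|lborel. s * (Ew x y * (inner h y / s)))"
    using s_pos by (simp add: inner_commute)
  also have "\<dots> = s * DZ x h" unfolding DZ_def J_def by simp
  finally show ?thesis .
qed

lemma Z_cont: "continuous_on UNIV Z"
  using J_smooth[OF PG_const[of "1::real"], of 0] unfolding Z_def[abs_def] by simp

lemma Q_lower:
  fixes z :: 'a
  shows "\<exists>\<kappa>>0. \<forall>x. exp (- inner x z / s) * Z x \<ge> \<kappa> * exp (norm x / s)"
proof -
  define g0 where "g0 y = exp (- (norm y ^ 2) / (2 * s)) * nu y" for y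
  have g0c: "continuous_on UNIV g0" unfolding g0_def by (intro continuous_intros nu_cont) (use s_pos in auto)
  obtain ym where ym: "ym \<in> cball z 3" "\<And>y. y \<in> cball z 3 \<Longrightarrow> g0 ym \<le> g0 y"
    using continuous_attains_inf[of "cball z 3" g0] g0c compact_cball
    by (metis continuous_on_subset cball_eq_empty empty_iff subset_UNIV zero_le_numeral linorder_not_less)
  define m0 where "m0 = g0 ym"
  have m0: "m0 > 0" unfolding m0_def g0_def using nu_pos by simp
  define V where "V = measure lborel (ball (0::'a) 1)"
  have V: "V > 0" unfolding V_def by (rule content_ball_pos) simp
  have Vc: "measure lborel (ball c 1) = V" for c :: 'a
    unfolding V_def using content_ball_conv_unit_ball[of 1 c] by simp
  show ?thesis
  proof (intro exI[of _ "m0 * V"] conjI allI)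
    show "m0 * V > 0" using m0 V by simp
    fix x :: 'a
    define uh where "uh = (if x = 0 then (SOME b. b \<in> Basis) else x /\<^sub>R norm x)"
    have nuh: "norm uh = 1" unfolding uh_def using SOME_Basis by auto
    have xuh: "inner x uh = norm x"
      unfolding uh_def by (auto simp: power2_norm_eq_inner[symmetric] power2_eq_square)
    define c where "c = z + 2 *\<^sub>R uh"
    define h where "h y = exp (- inner x z / s) * Ew x y" for y
    have hi: "integrable lborel h" unfolding h_def using Ew_int[of x] by simp
    have h0: "h y \<ge> 0" for y unfolding h_def using E_pos[of x y] by simp
    have heq: "h y = exp (inner x (y - z) / s) * g0 y" for y
    proof -
      have "- inner x z / s + (inner x y / s - norm y ^ 2 / (2 * s)) = inner x (y - z) / s + (- (norm y ^ 2) / (2 * s))"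
        by (simp add: inner_diff_right diff_divide_distrib)
      then show ?thesis unfolding h_def Ew_def g0_def
        by (metis (no_types, lifting) exp_add mult.assoc)
    qed
    have hb: "h y \<ge> exp (norm x / s) * m0" if y: "y \<in> ball c 1" for y
    proof -
      have dyc: "norm (y - c) < 1" using y by (simp add: dist_norm norm_minus_commute)
      have "y \<in> cball z 3"
      proof -
        have "norm (y - z) \<le> norm (y - c) + norm (c - z)"
          using norm_triangle_ineq[of "y - c" "c - z"] by simp
        also have "norm (c - z) = 2" unfolding c_def using nuh by simp
        finally show ?thesis using dyc by (simp add: dist_norm norm_minus_commute)
      qed
      then have gm: "g0 y \<ge> m0" unfolding m0_def using ym(2) by blast
      have "inner x (y - c) \<ge> - norm x"
      proof -
        have "\<bar>inner x (y - c)\<bar> \<le> norm x * norm (y - c)" by (rule Cauchy_Schwarz_ineq2)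
        also have "\<dots> \<le> norm x" using dyc by (simp add: mult_left_le)
        finally show ?thesis by linarith
      qed
      moreover have "inner x (y - z) = inner x (y - c) + 2 * norm x"
        unfolding c_def using xuh by (simp add: inner_diff_right inner_add_right)
      ultimately have "inner x (y - z) \<ge> norm x" by linarith
      then have "exp (norm x / s) \<le> exp (inner x (y - z) / s)"
        using s_pos by (simp add: divide_right_mono)
      then show ?thesis unfolding heq using gm m0
        by (intro mult_mono) auto
    qed
    have "(LINT y|lborel. h y) \<ge> exp (norm x / s) * m0 * measure lborel (ball c 1)"
      by (rule ball_lower[OF hi h0]) (use m0 hb in auto)
    moreover have "(LINT y|lborel. h y) = exp (- inner x z / s) * Z x"
      unfolding h_def Z_def J1_eq by simp
    ultimately show "exp (- inner x z / s) * Z x \<ge> m0 * V * exp (norm x / s)"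
      unfolding Vc by (simp add: mult_ac)
  qed
qed

lemma F_surj: "surj F"
proof -
  have "\<exists>x. F x = z" for z
  proof -
    define Q where "Q x = exp (- inner x z / s) * Z x" for x
    obtain \<kappa> where k0: "\<kappa> > 0" and kb: "\<And>x. Q x \<ge> \<kappa> * exp (norm x / s)"
      using Q_lower[of z] unfolding Q_def by blast
    have Qc: "continuous_on UNIV Q" unfolding Q_def[abs_def]
      by (intro continuous_intros Z_cont) (use s_pos in auto)
    define R where "R = s * (Q 0 / \<kappa>)"
    have Q00: "Q 0 > 0" unfolding Q_def using Z_pos by simp
    have R0: "R \<ge> 0" unfolding R_def using s_pos k0 Q00 by simp
    have kR: "\<kappa> * exp (R / s) > Q 0"
    proof -
      have e: "R / s = Q 0 / \<kappa>" unfolding R_def using s_pos by simp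
      have "1 + Q 0 / \<kappa> \<le> exp (R / s)" using exp_ge_add_one_self[of "R / s"] unfolding e by simp
      then have "\<kappa> * exp (R / s) \<ge> \<kappa> * (1 + Q 0 / \<kappa>)" using k0 by simp
      also have "\<kappa> * (1 + Q 0 / \<kappa>) = \<kappa> + Q 0" using k0 by (simp add: field_simps)
      finally show ?thesis using k0 by simp
    qed
    obtain xm where xm: "xm \<in> cball 0 R" "\<And>y. y \<in> cball 0 R \<Longrightarrow> Q xm \<le> Q y"
      using continuous_attains_inf[of "cball (0::'a) R" Q] Qc R0
      by (metis compact_cball continuous_on_subset cball_eq_empty empty_iff subset_UNIV linorder_not_less)
    have gmin: "Q xm \<le> Q y" for y
    proof (cases "y \<in> cball 0 R")
      case True then show ?thesis using xm by blast
    next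
      case False
      then have "norm y > R" by simp
      then have "exp (R / s) \<le> exp (norm y / s)" using s_pos by (simp add: divide_right_mono)
      then have "\<kappa> * exp (R / s) \<le> Q y" using kb[of y] k0 by (smt (verit) mult_left_mono)
      moreover have "Q xm \<le> Q 0" using xm(2)[of 0] R0 by simp
      ultimately show ?thesis using kR by linarith
    qed
    define DQ where "DQ h = exp (- inner xm z / s) * DZ xm h + (- inner h z / s * exp (- inner xm z / s)) * Z xm" for h
    have dZ: "(Z has_derivative DZ xm) (at xm)"
      unfolding Z_def[abs_def] DZ_def by (rule J_deriv[OF PG_const])
    have dE: "((\<lambda>x. exp (- inner x z / s)) has_derivative (\<lambda>h. - inner h z / s * exp (- inner xm z / s))) (at xm)"
      using s_pos by (auto intro!: derivative_eq_intros simp: mult_ac)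
    have dQ: "(Q has_derivative DQ) (at xm)"
      unfolding Q_def[abs_def] DQ_def[abs_def]
      by (rule has_derivative_eq_rhs[OF has_derivative_mult[OF dE dZ]]) (simp add: fun_eq_iff mult_ac)
    have DQ0: "DQ = (\<lambda>h. 0)"
      by (rule differential_zero_maxmin[of xm UNIV, OF _ _ dQ]) (use gmin in auto)
    have DZe: "DZ xm h = inner h z / s * Z xm" for h
    proof -
      have "DQ h = 0" using DQ0 by simp
      then have "exp (- inner xm z / s) * (DZ xm h - inner h z / s * Z xm) = 0"
        unfolding DQ_def by (simp add: algebra_simps)
      then show ?thesis by simp
    qed
    have "inner (N xm - Z xm *\<^sub>R z) h = 0" for h
      unfolding inner_diff_left N_inner DZe using s_pos by (simp add: inner_commute)
    then have "N xm - Z xm *\<^sub>R z = 0" by (metis inner_eq_zero_iff)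
    then have "F xm = z" unfolding F_alt using Z_pos[of xm] by simp
    then show ?thesis by blast
  qed
  then show ?thesis by (metis surj_def)
qed

end

locale invs =
  fixes F :: "'a::euclidean_space \<Rightarrow> 'a"
  assumes Fbij: "bij F" and Fsm: "\<And>k. Ck k F" and Finj: "\<And>x. inj (frechet_derivative F (at x))"
begin

definition "A x = frechet_derivative F (at x)"
definition "a j x = A x j"
definition "Inv x w = (SOME z. A x z = w)"

lemma Fdiff: "F differentiable (at x)"
  using Fsm[of 1] by (simp add: diffon_UNIV)

lemma A_deriv: "(F has_derivative A x) (at x)"
  unfolding A_def by (rule fd_works[OF Fdiff])

lemma A_lin: "linear (A x)"
  using A_deriv has_derivative_linear by blast

lemma A_inj: "inj (A x)" unfolding A_def by (rule Finj)

lemma A_surj: "surj (A x)" using A_lin A_inj linear_inj_imp_surj by blast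

lemma Inv_right: "A x (Inv x w) = w"
  unfolding Inv_def using A_surj[of x] by (metis (mono_tags) someI_ex surj_def)

lemma Inv_left: "Inv x (A x z) = z"
  using A_inj[of x] Inv_right by (metis injD)

lemma Inv_lin: "linear (Inv x)"
proof (rule linearI)
  fix u v
  have "A x (Inv x (u + v)) = A x (Inv x u + Inv x v)"
    using Inv_right linear_add[OF A_lin] by metis
  then show "Inv x (u + v) = Inv x u + Inv x v" using A_inj[of x] by (simp add: inj_eq)
next
  fix c :: real and u
  have "A x (Inv x (c *\<^sub>R u)) = A x (c *\<^sub>R Inv x u)"
    using Inv_right linear_scale[OF A_lin] by metis
  then show "Inv x (c *\<^sub>R u) = c *\<^sub>R Inv x u" using A_inj[of x] by (simp add: inj_eq)
qed

lemma a_smooth: "Ck k (a j)"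
  using Fsm[of "Suc k"] unfolding a_def[abs_def] A_def by simp

lemma A_expand: "A x w = (\<Sum>j\<in>Basis. (w \<bullet> j) *\<^sub>R a j x)"
  unfolding a_def by (rule linear_basis_expand[OF A_lin])

definition "Gam p = (fst p, A (fst p) (snd p))"
definition "G p = (fst p, Inv (fst p) (snd p))"

lemma Gam_G: "Gam (G p) = p" unfolding Gam_def G_def by (simp add: Inv_right)
lemma G_Gam: "G (Gam p) = p" unfolding Gam_def G_def by (simp add: Inv_left)

lemma Gam_alt: "Gam = (\<lambda>p. (fst p, \<Sum>j\<in>Basis. (snd p \<bullet> j) *\<^sub>R a j (fst p)))"
  unfolding Gam_def[abs_def] A_expand by simp

lemma a_cont: "continuous_on UNIV (a j)" using a_smooth[of 0] by simp

lemma Gam_cont: "continuous_on UNIV Gam"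
proof -
  have c: "continuous_on UNIV (\<lambda>p::'a\<times>'a. a j (fst p))" for j
    using continuous_on_compose2[OF a_cont[of j] continuous_on_fst[OF continuous_on_id]] by simp
  show ?thesis unfolding Gam_alt by (intro continuous_intros c)
qed

lemma G_cont: "continuous_on UNIV G"
proof -
  have "inj Gam" by (metis G_Gam injI)
  then obtain g where h: "homeomorphism UNIV (Gam ` UNIV) Gam g"
    using invariance_of_domain_homeomorphism[of UNIV Gam] Gam_cont by auto
  have sG: "Gam ` UNIV = UNIV" by (metis Gam_G surj_def)
  have "g q = G q" for q
    using h unfolding homeomorphism_def by (metis G_Gam Gam_G UNIV_I)
  then have "g = G" by auto
  then show ?thesis using h sG unfolding homeomorphism_def by simp
qed

definition "Da j x = frechet_derivative (a j) (at x)"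

lemma a_diff: "a j differentiable (at x)"
  using a_smooth[of 1 j] by (simp add: diffon_UNIV)

lemma a_deriv: "(a j has_derivative Da j x) (at x)"
  unfolding Da_def by (rule fd_works[OF a_diff])

definition "Gam' x0 z0 d = (fst d, \<Sum>j\<in>Basis. ((snd d \<bullet> j) *\<^sub>R a j x0 + (z0 \<bullet> j) *\<^sub>R Da j x0 (fst d)))"

lemma Gam_deriv: "(Gam has_derivative Gam' x0 z0) (at (x0, z0))"
proof -
  have d1: "((\<lambda>p::'a\<times>'a. a j (fst p)) has_derivative (\<lambda>d. Da j x0 (fst d))) (at (x0, z0))" for j
  proof -
    have ad: "(a j has_derivative Da j x0) (at (fst (x0, z0)))" using a_deriv by simp
    show ?thesis using has_derivative_compose[OF has_derivative_fst[OF has_derivative_ident, of "at (x0,z0)"] ad] by simp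
  qed
  have d2: "((\<lambda>p::'a\<times>'a. (snd p \<bullet> j) *\<^sub>R a j (fst p)) has_derivative
      (\<lambda>d. (snd (x0,z0) \<bullet> j) *\<^sub>R Da j x0 (fst d) + (snd d \<bullet> j) *\<^sub>R a j (fst (x0,z0)))) (at (x0, z0))" for j
    by (rule has_derivative_scaleR[OF has_derivative_inner_left[OF has_derivative_snd[OF has_derivative_ident]] d1])
  have "(Gam has_derivative (\<lambda>d. (fst d, \<Sum>j\<in>Basis. (snd (x0,z0) \<bullet> j) *\<^sub>R Da j x0 (fst d) + (snd d \<bullet> j) *\<^sub>R a j (fst (x0,z0))))) (at (x0, z0))"
    unfolding Gam_alt
    by (intro has_derivative_Pair has_derivative_fst[OF has_derivative_ident] has_derivative_sum d2)
  then show ?thesis unfolding Gam'_def[abs_def] by (simp add: add.commute)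
qed

end

context invs begin

lemma Gam'_lin: "linear (Gam' x0 z0)"
  using Gam_deriv has_derivative_linear by blast

lemma Gam'_inj: "inj (Gam' x0 z0)"
proof -
  have "d = 0" if "Gam' x0 z0 d = 0" for d
  proof -
    have f: "fst d = 0" using that unfolding Gam'_def by (simp add: prod_eq_iff)
    have "snd (Gam' x0 z0 d) = 0" using that by simp
    then have "(\<Sum>j\<in>Basis. (snd d \<bullet> j) *\<^sub>R a j x0 + (z0 \<bullet> j) *\<^sub>R Da j x0 (fst d)) = 0"
      unfolding Gam'_def by (simp only: snd_conv)
    moreover have "Da j x0 0 = 0" for j using a_deriv[of j x0] has_derivative_linear linear_0 by blast
    ultimately have "A x0 (snd d) = 0" unfolding A_expand f by simp
    then have "snd d = 0" using A_inj[of x0] linear_injective_0[OF A_lin] by blast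
    then show ?thesis using f by (simp add: prod_eq_iff)
  qed
  then show ?thesis using Gam'_lin linear_injective_0 by blast
qed

lemma Gam'_surj: "surj (Gam' x0 z0)"
  using Gam'_lin Gam'_inj linear_inj_imp_surj by blast

lemma G_deriv:
  obtains gi where "linear gi" "\<And>d. Gam' x0 (Inv x0 w) (gi d) = d"
    "(G has_derivative gi) (at (x0, w))"
proof -
  obtain gi where gl: "linear gi" and gc: "gi \<circ> Gam' x0 (Inv x0 w) = id"
    using linear_injective_left_inverse[OF Gam'_lin Gam'_inj] by blast
  have gr: "Gam' x0 (Inv x0 w) (gi d) = d" for d
  proof -
    obtain e where "d = Gam' x0 (Inv x0 w) e" using Gam'_surj by (metis surj_def)
    then show ?thesis using gc by (metis comp_apply id_apply)
  qed
  have "(G has_derivative gi) (at (x0, w))"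
  proof (rule has_derivative_inverse_basic[where T=UNIV])
    show "(Gam has_derivative Gam' x0 (Inv x0 w)) (at (G (x0, w)))"
      using Gam_deriv[of x0 "Inv x0 w"] by (simp add: G_def)
    show "bounded_linear gi" using gl by (simp add: linear_conv_bounded_linear)
    show "gi \<circ> Gam' x0 (Inv x0 w) = id" by (rule gc)
    show "continuous (at (x0, w)) G" using G_cont by (simp add: continuous_on_eq_continuous_at)
  qed (auto simp: Gam_G)
  then show ?thesis using that gl gr by blast
qed

definition "DInv x0 w h = - Inv x0 (\<Sum>j\<in>Basis. (Inv x0 w \<bullet> j) *\<^sub>R Da j x0 h)"

lemma Inv_deriv: "((\<lambda>x. Inv x w) has_derivative DInv x0 w) (at x0)"
proof -
  obtain gi where gl: "linear gi" and gr: "\<And>d. Gam' x0 (Inv x0 w) (gi d) = d"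
    and gd: "(G has_derivative gi) (at (x0, w))"
    using G_deriv by blast
  have p: "((\<lambda>x. (x, w)) has_derivative (\<lambda>h. (h, 0))) (at x0)"
    by (intro has_derivative_Pair has_derivative_ident has_derivative_const)
  have "((\<lambda>x. G (x, w)) has_derivative (\<lambda>h. gi (h, 0))) (at x0)"
    by (rule has_derivative_compose[OF p gd])
  then have "((\<lambda>x. snd (G (x, w))) has_derivative (\<lambda>h. snd (gi (h, 0)))) (at x0)"
    by (rule has_derivative_snd)
  moreover have "snd (gi (h, 0)) = DInv x0 w h" for h
  proof -
    define d where "d = gi (h, 0)"
    have gd: "Gam' x0 (Inv x0 w) d = (h, 0)" unfolding d_def by (rule gr)
    have "fst (Gam' x0 (Inv x0 w) d) = h" using gd by simp
    then have f: "fst d = h" unfolding Gam'_def by (simp only: fst_conv)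
    have "snd (Gam' x0 (Inv x0 w) d) = 0" using gd by simp
    then have s0: "(\<Sum>j\<in>Basis. (snd d \<bullet> j) *\<^sub>R a j x0 + (Inv x0 w \<bullet> j) *\<^sub>R Da j x0 (fst d)) = 0"
      unfolding Gam'_def by (simp only: snd_conv)
    from s0 have "A x0 (snd d) + (\<Sum>j\<in>Basis. (Inv x0 w \<bullet> j) *\<^sub>R Da j x0 h) = 0"
      unfolding A_expand f by (simp add: sum.distrib)
    then have "A x0 (snd d) = - (\<Sum>j\<in>Basis. (Inv x0 w \<bullet> j) *\<^sub>R Da j x0 h)"
      by (simp add: eq_neg_iff_add_eq_0)
    then have "snd d = Inv x0 (- (\<Sum>j\<in>Basis. (Inv x0 w \<bullet> j) *\<^sub>R Da j x0 h))"
      by (metis Inv_left)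
    then show ?thesis unfolding d_def DInv_def using linear_neg[OF Inv_lin] by simp
  qed
  ultimately show ?thesis unfolding G_def by (simp add: fun_eq_iff[symmetric])
qed

lemma DInv_expand: "DInv x w h = - (\<Sum>j\<in>Basis. (Inv x w \<bullet> j) *\<^sub>R (\<Sum>l\<in>Basis. (Da j x h \<bullet> l) *\<^sub>R Inv x l))"
proof -
  have "Inv x (\<Sum>j\<in>Basis. (Inv x w \<bullet> j) *\<^sub>R Da j x h) = (\<Sum>j\<in>Basis. (Inv x w \<bullet> j) *\<^sub>R Inv x (Da j x h))"
    using Inv_lin[of x] by (simp add: linear_sum linear_scale)
  moreover have "Inv x (Da j x h) = (\<Sum>l\<in>Basis. (Da j x h \<bullet> l) *\<^sub>R Inv x l)" for j
    by (rule linear_basis_expand[OF Inv_lin])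
  ultimately show ?thesis unfolding DInv_def by simp
qed

lemma Inv_smooth: "Ck k (\<lambda>x. Inv x w)"
proof (induction k arbitrary: w)
  case 0
  have "continuous_on UNIV (\<lambda>x. snd (G (x, w)))"
    by (intro continuous_intros continuous_on_compose2[OF G_cont]) auto
  then show ?case unfolding G_def by simp
next
  case (Suc k)
  have d: "(\<lambda>x. Inv x w) differentiable (at x)" for x
    using Inv_deriv differentiable_def by blast
  have e: "frechet_derivative (\<lambda>x. Inv x w) (at x) = DInv x w" for x
    by (rule fd_eq[OF Inv_deriv])
  have "Ck k (\<lambda>x. DInv x w h)" for h
  proof -
    have da: "Ck k (\<lambda>x. Da j x h \<bullet> l)" for j l
      using a_smooth[of "Suc k" j] unfolding Da_def
      by (intro Ck_blin[where L="\<lambda>z. z \<bullet> l"] bounded_linear_inner_left) auto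
    have "Ck k (\<lambda>x. (-1::real) *\<^sub>R (\<Sum>j\<in>Basis. (Inv x w \<bullet> j) *\<^sub>R (\<Sum>l\<in>Basis. (Da j x h \<bullet> l) *\<^sub>R Inv x l)))"
      by (intro Ck_scaleR Ck_const Ck_sum Ck_blin[where L="\<lambda>z. z \<bullet> _"] bounded_linear_inner_left Suc.IH da)
    then show ?thesis unfolding DInv_expand by simp
  qed
  then show ?case using d by (simp add: diffon_UNIV e)
qed

lemma g_cont: "continuous_on UNIV (inv F)"
proof -
  have "inj F" using Fbij bij_is_inj by blast
  then obtain g where h: "homeomorphism UNIV (F ` UNIV) F g"
    using invariance_of_domain_homeomorphism[of UNIV F] Fsm[of 0] by auto
  have sF: "F ` UNIV = UNIV" using Fbij bij_is_surj by blast
  have "g q = inv F q" for q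
    using h sF unfolding homeomorphism_def by (metis UNIV_I \<open>inj F\<close> inv_f_f)
  then have "g = inv F" by auto
  then show ?thesis using h sF unfolding homeomorphism_def by simp
qed

lemma g_deriv: "(inv F has_derivative Inv (inv F y)) (at y)"
proof (rule has_derivative_inverse_basic[where T=UNIV])
  show "(F has_derivative A (inv F y)) (at (inv F y))" by (rule A_deriv)
  show "bounded_linear (Inv (inv F y))" using Inv_lin by (simp add: linear_conv_bounded_linear)
  show "Inv (inv F y) \<circ> A (inv F y) = id" by (simp add: fun_eq_iff Inv_left)
  show "continuous (at y) (inv F)" using g_cont by (simp add: continuous_on_eq_continuous_at)
  show "\<And>z. z \<in> UNIV \<Longrightarrow> F (inv F z) = z" using Fbij by (simp add: bij_is_surj surj_f_inv_f)
qed auto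

lemma g_smooth: "Ck k (inv F)"
proof (induction k)
  case 0 then show ?case using g_cont by simp
next
  case (Suc k)
  have d: "inv F differentiable (at y)" for y using g_deriv differentiable_def by blast
  have e: "frechet_derivative (inv F) (at y) = Inv (inv F y)" for y by (rule fd_eq[OF g_deriv])
  have "Ck k (\<lambda>y. Inv (inv F y) v)" for v
    by (rule Ck_comp[OF Inv_smooth Suc.IH])
  then show ?case using d by (simp add: diffon_UNIV e)
qed

end

theorem proposition1:
  fixes f :: "'a::euclidean_space \<Rightarrow> real" and lam \<delta> :: real
  assumes "lam > 0" and "\<delta> > 0"
    and "continuous_on UNIV f"
    and "\<exists>x0. \<forall>y. f x0 \<le> f y"
    and "(\<integral>\<^sup>+ y. ennreal (exp (- f y / \<delta>)) \<partial>lborel) < \<infinity>"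
  shows "smooth_map (zprox \<delta> lam f) \<and> bij (zprox \<delta> lam f)
         \<and> smooth_map (inv (zprox \<delta> lam f))"
proof -
  interpret z: zs f lam \<delta> using assms by unfold_locales auto
  have bF: "bij z.F" using z.F_inj z.F_surj by (rule bijI)
  have iF: "inj (frechet_derivative z.F (at x))" for x
    using z.DF_inj[of x] fd_eq[OF z.F_deriv[of x]] by simp
  interpret i: invs z.F using bF z.F_smooth iF by unfold_locales auto
  show ?thesis unfolding z.zprox_eq smooth_map_def using z.F_smooth i.g_smooth bF by blast
qed

end
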